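(* There is a constant $C>0$ independent of $h$ such that, for $h$ sufficiently small, the solution $u^h$ of the hybrid discrete problem $$F_h(u^h)(x)=0\ \text{for } x\in\Omega^h_0,\qquad u^h=r_h(g)\ \text{on }\partial\Omega^h,$$ lying in $B_\rho(r_h(u))$ with $\rho=C_*h^{2+n/2}$ (the fixed point of $S$), satisfies $|u^h|_{\Omega^h_0}\le C$.
   Context: Setting. Let $n\ge 2$, $\Omega=(0,1)^n$, $f\in C(\overline\Omega)$ with $f>0$, and $g\in C(\partial\Omega)$ admitting a convex extension $\tilde g\in C(\overline\Omega)$. Let $u$ be the unique convex viscosity solution of $\det D^2u=f$ in $\Omega$, $u=g$ on $\partial\Omega$. Let $h>0$ with $1/h\in\mathbb Z$, $\mathbb Z_h=\{x\in\mathbb R^n: x_i/h\in\mathbb Z\ \forall i\}$, $\Omega^h=\overline\Omega\cap\mathbb Z_h$, $\Omega^h_0=\Omega\cap\mathbb Z_h$, $\partial\Omega^h=\Omega^h\setminus\Omega^h_0$. $\mathcal M(\Omega^h)$ is the set of real functions on $\Omega^h$ (mesh functions); $r_h(v)$ is the restriction of a function $v$ to the grid. For $T_h\subset\Omega^h$, $|v^h|_{T_h}=\max_{x\in T_h}|v^h(x)|$. With $e^i$ the unit vectors, $\partial^i_+v^h(x)=(v^h(x+he^i)-v^h(x))/h$, $\partial^i_-v^h(x)=(v^h(x)-v^h(x-he^i))/h$, $D_hv^h=(\partial^i_+v^h)_i$, $\operatorname{div}_h(v^{h,i})_i=\sum_i\partial^i_-v^{h,i}$, and the discrete Hessian $\mathcal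 H_dv^h=(\partial^j_-\partial^i_+v^h)_{i,j}$. Let $\Omega_r\subset\Omega$ be an open bounded convex set such that $u$ is $C^2$ in a neighborhood of every point of $\Omega_r$. Put $\Omega_r^h=\overline{\Omega_r}\cap\mathbb Z_h$, let $\Omega^h_{r,0}$ be the set of $x\in\Omega_r^h$ at which $\mathcal H_dv^h(x)$ is defined using only values at points of $\Omega_r^h$, $\partial\Omega_r^h=\Omega_r^h\setminus\Omega^h_{r,0}$, and $\Omega_s^h=\Omega^h_0\setminus\Omega^h_{r,0}$. Define $M_r[v^h]=\frac1n\operatorname{div}_h[(\operatorname{cof}\operatorname{sym}\mathcal H_dv^h)^TD_hv^h]$, where $\operatorname{sym}A=(A+A^T)/2$ and $\operatorname{cof}A$ is the cofactor matrix. For $x\in\Omega_0^h$ let $W_h(x)$ be the set of orthogonal bases $(\alpha_1,\dots,\alpha_n)$ of $\mathbb R^n$ with $x\pm\alpha_i\in\Omega^h$ for all $i$, and $$M_s^+[v^h](x)=\inf_{(\alpha_1,\dots,\alpha_n)\in W_h(x)}\prod_{i=1}^n\max\Big(\tfrac{v^h(x+\alpha_i)-2v^h(x)+v^h(x-\alpha_i)}{|\alpha_i|^2},0\Big).$$ The hybrid operator is $F_h(v^h)(x)=M_s^+[v^h](x)-f(x)$ for $x\in\Omega_s^h$ and $F_h(v^h)(x)=M_r[v^h](x)-f(x)$ for $x\in\Omega^h_{r,0}$. Let $\Delta_h=\operatorname{div}_hD_h$ and define the linear operator $L_h$ on $\mathcal M(\Omega^h)$ by $L_hv^h(x)=v^h(x)$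 for $x\in\Omega_s^h$ and $L_hv^h(x)=w^h(x)$ for $x\in\Omega^h_{r,0}$, where $w^h$ solves $\Delta_hw^h=v^h$ on $\Omega^h_{r,0}$, $w^h=0$ on $\partial\Omega^h_r$. Let $\alpha=h^{(3+n/2)/(n-1)}$ and for $\nu_1,\nu_2>0$ define $S(\alpha v^h)(x)=\alpha v^h(x)-\nu_x\alpha^nL_hF_h(v^h)(x)$, with $\nu_x=\nu_1$ for $x\in\Omega_s^h$ and $\nu_x=\nu_2$ for $x\in\Omega^h_{r,0}$. The seminorm $|v^h|_{1,h}=\big(h^n\sum_{i=1}^n\sum_{x\in\Omega^h_{r,0}}(\partial^i_+v^h(x))^2\big)^{1/2}$ only involves points of $\Omega^h_{r,0}$. For $\rho>0$, $B_\rho(r_h(u))=\{v^h\in\mathcal M(\Omega^h): |v^h-r_h(u)|_{1,h}\le\rho,\ v^h=r_h(g)\text{ on }\partial\Omega^h,\ v^h=r_h(u)\text{ on }\partial\Omega^h_{r}\}$. For $h$ small, the hybrid discrete problem has a unique solution $u^h$ in $B_\rho(r_h(u))$, $\rho=C_*h^{2+n/2}$ for a fixed constant $C_*$, with $\alpha u^h$ a fixed point of $S$ for suitable $\nu_1,\nu_2$. *)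

theory Defs
  imports "HOL-Analysis.Analysis"
begin

definition Omega :: "(real^'n) set" where
  "Omega = {x. \<forall>i. 0 < x $ i \<and> x $ i < 1}"

definition pderiv :: "'n \<Rightarrow> (real^'n \<Rightarrow> real) \<Rightarrow> real^'n \<Rightarrow> real" where
  "pderiv i \<phi> x = deriv (\<lambda>t. \<phi> (x + t *\<^sub>R axis i 1)) 0"

definition C2_on :: "(real^'n) set \<Rightarrow> (real^'n \<Rightarrow> real) \<Rightarrow> bool" where
  "C2_on S \<phi> \<longleftrightarrow> open S \<and> continuous_on S \<phi>
     \<and> (\<forall>i. \<forall>x\<in>S. (\<lambda>t. \<phi> (x + t *\<^sub>R axis i 1)) differentiable (at 0))
     \<and> (\<forall>i. continuous_on S (pderiv i \<phi>))
     \<and> (\<forall>i j. \<forall>x\<in>S. (\<lambda>t. pderiv i \<phi> (x + t *\<^sub>R axis j 1)) differentiable (at 0))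
     \<and> (\<forall>i j. continuous_on S (pderiv j (pderiv i \<phi>)))"

definition hess :: "(real^'n \<Rightarrow> real) \<Rightarrow> real^'n \<Rightarrow> real^'n^'n" where
  "hess \<phi> x = (\<chi> i j. pderiv j (pderiv i \<phi>) x)"

text \<open>Convex viscosity solution of det D^2 u = f in Omega, u = g on the boundary
  (Gutierrez' definition, with convex C^2 test functions on balls).\<close>
definition MA_viscosity_solution ::
  "(real^'n \<Rightarrow> real) \<Rightarrow> (real^'n \<Rightarrow> real) \<Rightarrow> (real^'n \<Rightarrow> real) \<Rightarrow> bool" where
  "MA_viscosity_solution f g u \<longleftrightarrow>
     continuous_on (closure Omega) u \<and> convex_on Omega u
     \<and> (\<forall>x\<in>frontier Omega. u x = g x)
     \<and> (\<forall>x0\<in>Omega. \<forall>r>0. \<forall>\<phi>. ball x0 r \<subseteq> Omega \<and> C2_on (ball x0 r) \<phi> \<and> convex_on (ball x0 r) \<phi> \<longrightarrow>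
          ((\<forall>y\<in>ball x0 r. u y - \<phi> y \<le> u x0 - \<phi> x0) \<longrightarrow> det (hess \<phi> x0) \<ge> f x0)
        \<and> ((\<forall>y\<in>ball x0 r. u y - \<phi> y \<ge> u x0 - \<phi> x0) \<longrightarrow> det (hess \<phi> x0) \<le> f x0))"

definition grid :: "real \<Rightarrow> (real^'n) set" where
  "grid h = {x. \<forall>i. x $ i / h \<in> \<int>}"

definition Omega_h :: "real \<Rightarrow> (real^'n) set" where
  "Omega_h h = closure Omega \<inter> grid h"

definition Omega_h0 :: "real \<Rightarrow> (real^'n) set" where
  "Omega_h0 h = Omega \<inter> grid h"

definition bdry_h :: "real \<Rightarrow> (real^'n) set" where
  "bdry_h h = Omega_h h - Omega_h0 h"

definition fwd :: "real \<Rightarrow> 'n \<Rightarrow> (real^'n \<Rightarrow> real) \<Rightarrow> real^'n \<Rightarrow> real" where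
  "fwd h i v x = (v (x + h *\<^sub>R axis i 1) - v x) / h"

definition bwd :: "real \<Rightarrow> 'n \<Rightarrow> (real^'n \<Rightarrow> real) \<Rightarrow> real^'n \<Rightarrow> real" where
  "bwd h i v x = (v x - v (x - h *\<^sub>R axis i 1)) / h"

definition Dh :: "real \<Rightarrow> (real^'n \<Rightarrow> real) \<Rightarrow> real^'n \<Rightarrow> real^'n" where
  "Dh h v x = (\<chi> i. fwd h i v x)"

definition divh :: "real \<Rightarrow> (real^'n \<Rightarrow> real^'n) \<Rightarrow> real^'n \<Rightarrow> real" where
  "divh h w x = (\<Sum>i\<in>UNIV. bwd h i (\<lambda>y. w y $ i) x)"

definition Hd :: "real \<Rightarrow> (real^'n \<Rightarrow> real) \<Rightarrow> real^'n \<Rightarrow> real^'n^'n" where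
  "Hd h v x = (\<chi> i j. bwd h j (fwd h i v) x)"

definition Hd_stencil :: "real \<Rightarrow> real^'n \<Rightarrow> (real^'n) set" where
  "Hd_stencil h x = {x} \<union> {x + h *\<^sub>R axis i 1 | i. True} \<union> {x - h *\<^sub>R axis j 1 | j. True}
     \<union> {x + h *\<^sub>R axis i 1 - h *\<^sub>R axis j 1 | i j. True}"

definition msym :: "real^'n^'n \<Rightarrow> real^'n^'n" where
  "msym A = (1/2) *\<^sub>R (A + transpose A)"

text \<open>Cofactor matrix: entry (i,j) is (-1)^(i+j) times the (i,j) minor, which equals
  the determinant of A with its i-th row replaced by the j-th unit vector.\<close>
definition cof :: "real^'n^'n \<Rightarrow> real^'n^'n" where
  "cof A = (\<chi> i j. det (\<chi> k. if k = i then axis j 1 else A $ k))"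

definition Omega_rh :: "(real^'n) set \<Rightarrow> real \<Rightarrow> (real^'n) set" where
  "Omega_rh Or h = closure Or \<inter> grid h"

definition Omega_r0 :: "(real^'n) set \<Rightarrow> real \<Rightarrow> (real^'n) set" where
  "Omega_r0 Or h = {x \<in> Omega_rh Or h. Hd_stencil h x \<subseteq> Omega_rh Or h}"

definition bdry_rh :: "(real^'n) set \<Rightarrow> real \<Rightarrow> (real^'n) set" where
  "bdry_rh Or h = Omega_rh Or h - Omega_r0 Or h"

definition Omega_s :: "(real^'n) set \<Rightarrow> real \<Rightarrow> (real^'n) set" where
  "Omega_s Or h = Omega_h0 h - Omega_r0 Or h"

definition Mr :: "real \<Rightarrow> (real^'n \<Rightarrow> real) \<Rightarrow> real^'n \<Rightarrow> real" where
  "Mr h v x = (1 / real CARD('n)) *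
     divh h (\<lambda>y. transpose (cof (msym (Hd h v y))) *v Dh h v y) x"

definition Wh :: "real \<Rightarrow> real^'n \<Rightarrow> ('n \<Rightarrow> real^'n) set" where
  "Wh h x = {\<alpha>. (\<forall>i. \<alpha> i \<noteq> 0) \<and> (\<forall>i j. i \<noteq> j \<longrightarrow> \<alpha> i \<bullet> \<alpha> j = 0)
              \<and> (\<forall>i. x + \<alpha> i \<in> Omega_h h \<and> x - \<alpha> i \<in> Omega_h h)}"

definition Ms_plus :: "real \<Rightarrow> (real^'n \<Rightarrow> real) \<Rightarrow> real^'n \<Rightarrow> real" where
  "Ms_plus h v x = (INF \<alpha>\<in>Wh h x.
      \<Prod>i\<in>UNIV. max ((v (x + \<alpha> i) - 2 * v x + v (x - \<alpha> i)) / (norm (\<alpha> i))\<^sup>2) 0)"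

definition Fh :: "(real^'n) set \<Rightarrow> (real^'n \<Rightarrow> real) \<Rightarrow> real \<Rightarrow> (real^'n \<Rightarrow> real) \<Rightarrow> real^'n \<Rightarrow> real" where
  "Fh Or f h v x = (if x \<in> Omega_s Or h then Ms_plus h v x - f x else Mr h v x - f x)"

definition seminorm1h :: "(real^'n) set \<Rightarrow> real \<Rightarrow> (real^'n \<Rightarrow> real) \<Rightarrow> real" where
  "seminorm1h Or h v = sqrt (h ^ CARD('n) * (\<Sum>i\<in>UNIV. \<Sum>x\<in>Omega_r0 Or h. (fwd h i v x)\<^sup>2))"

definition Bball :: "(real^'n) set \<Rightarrow> (real^'n \<Rightarrow> real) \<Rightarrow> (real^'n \<Rightarrow> real) \<Rightarrow> real \<Rightarrow> real
                     \<Rightarrow> (real^'n \<Rightarrow> real) set" where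
  "Bball Or g u h \<rho> = {v. seminorm1h Or h (\<lambda>x. v x - u x) \<le> \<rho>
      \<and> (\<forall>x\<in>bdry_h h. v x = g x) \<and> (\<forall>x\<in>bdry_rh Or h. v x = u x)}"

definition solves_hybrid :: "(real^'n) set \<Rightarrow> (real^'n \<Rightarrow> real) \<Rightarrow> (real^'n \<Rightarrow> real) \<Rightarrow> real
                             \<Rightarrow> (real^'n \<Rightarrow> real) \<Rightarrow> bool" where
  "solves_hybrid Or f g h v \<longleftrightarrow> (\<forall>x\<in>Omega_h0 h. Fh Or f h v x = 0) \<and> (\<forall>x\<in>bdry_h h. v x = g x)"

end

theory Submission
  imports Defs
begin

lemma Omega_box: "Omega = box (0::real^'n) 1"
  unfolding Omega_def interval_cart by simp

lemma closure_Omega: "closure (Omega::(real^'n) set) = cbox 0 1"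
proof -
  have "box (0::real^'n) 1 \<noteq> {}" by (simp add: interval_eq_empty_cart)
  then show ?thesis by (simp add: Omega_box)
qed

lemma mem_closure_Omega: "(x::real^'n) \<in> closure Omega \<longleftrightarrow> (\<forall>i. 0 \<le> x$i \<and> x$i \<le> 1)"
  by (simp add: closure_Omega mem_box_cart)

lemma finite_grid_cube:
  assumes h: "h > 0"
  shows "finite (closure Omega \<inter> grid h :: (real^'n) set)"
proof -
  let ?A = "PiE (UNIV::'n set) (\<lambda>_. {0..\<lceil>1/h\<rceil>})"
  have "closure Omega \<inter> grid h \<subseteq> (\<lambda>k. \<chi> i. h * of_int (k i)) ` ?A"
  proof
    fix x :: "real^'n" assume x: "x \<in> closure Omega \<inter> grid h"
    define k where "k = (\<lambda>i. \<lfloor>x$i/h\<rfloor>)"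
    have ki: "of_int (k i) = x$i/h" for i
      using x unfolding grid_def k_def by (auto elim!: Ints_cases)
    have "k \<in> ?A"
    proof -
      have "0 \<le> k i \<and> k i \<le> \<lceil>1/h\<rceil>" for i
      proof -
        have "0 \<le> x$i" "x$i \<le> 1" using x by (auto simp: mem_closure_Omega)
        then have "0 \<le> x$i/h" "x$i/h \<le> 1/h" using h by (auto simp: divide_right_mono)
        then show ?thesis unfolding k_def by (smt (verit) ceiling_correct floor_le_ceiling floor_mono le_floor_iff of_int_0 zero_le_floor ceiling_mono)
      qed
      then show ?thesis by auto
    qed
    moreover have "x = (\<chi> i. h * of_int (k i))"
      using h ki by (simp add: vec_eq_iff)
    ultimately show "x \<in> (\<lambda>k. \<chi> i. h * of_int (k i)) ` ?A" by blast
  qed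
  moreover have "finite ?A" by (rule finite_PiE) auto
  ultimately show ?thesis using finite_subset by blast
qed


lemma Omega_r0_sub: "Or \<subseteq> Omega \<Longrightarrow> Omega_r0 Or h \<subseteq> closure Omega \<inter> grid h"
  unfolding Omega_r0_def Omega_rh_def using closure_mono by blast

lemma step_bound:
  fixes d :: "real^'n \<Rightarrow> real"
  assumes h: "h > 0" and Cs: "Cstar > 0" and sub: "Or \<subseteq> Omega"
    and sn: "seminorm1h Or h d \<le> Cstar * h powr (2 + real CARD('n) / 2)"
    and y: "y \<in> Omega_r0 Or h"
  shows "\<bar>d (y + h *\<^sub>R axis i 1) - d y\<bar> \<le> Cstar * h^3"
proof -
  let ?n = "CARD('n)"
  define S where "S = (\<Sum>i\<in>UNIV. \<Sum>x\<in>Omega_r0 Or h. (fwd h i d x)\<^sup>2)"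
  have fin: "finite (Omega_r0 Or h)"
    using finite_subset[OF Omega_r0_sub[OF sub] finite_grid_cube[OF h]] .
  have S0: "S \<ge> 0" unfolding S_def by (intro sum_nonneg) auto
  have "(fwd h i d y)\<^sup>2 \<le> (\<Sum>x\<in>Omega_r0 Or h. (fwd h i d x)\<^sup>2)"
    using fin y by (intro member_le_sum) auto
  also have "\<dots> \<le> S" unfolding S_def
    by (rule member_le_sum) (auto intro: sum_nonneg)
  finally have fS: "(fwd h i d y)\<^sup>2 \<le> S" .
  have hn: "h ^ ?n > 0" using h by simp
  have "sqrt (h ^ ?n * S) \<le> Cstar * h powr (2 + real ?n / 2)"
    using sn unfolding seminorm1h_def S_def .
  then have "(sqrt (h ^ ?n * S))\<^sup>2 \<le> (Cstar * h powr (2 + real ?n / 2))\<^sup>2"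
    by (rule power_mono) (use hn S0 in simp)
  then have "h ^ ?n * S \<le> (Cstar * h powr (2 + real ?n / 2))\<^sup>2"
    using hn S0 by simp
  also have "\<dots> = Cstar\<^sup>2 * (h powr (2 + real ?n / 2))\<^sup>2" by (simp add: power_mult_distrib)
  also have "(h powr (2 + real ?n / 2))\<^sup>2 = h powr (2 * (2 + real ?n / 2))"
    using h by (subst powr_power) auto
  also have "2 * (2 + real ?n / 2) = 4 + real ?n" by simp
  also have "h powr (4 + real ?n) = h^4 * h^?n"
    using h by (simp only: powr_add powr_realpow powr_numeral less_imp_le)
  finally have "h ^ ?n * S \<le> h ^ ?n * (Cstar\<^sup>2 * h^4)" by (simp add: algebra_simps)
  then have "S \<le> Cstar\<^sup>2 * h^4" using hn by simp
  moreover have "Cstar\<^sup>2 * h^4 = (Cstar * h^2)\<^sup>2" by (simp add: power_mult_distrib flip: power_mult)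
  ultimately have "(fwd h i d y)\<^sup>2 \<le> (Cstar * h^2)\<^sup>2" using fS by linarith
  then have "\<bar>fwd h i d y\<bar>\<^sup>2 \<le> (Cstar * h^2)\<^sup>2" by simp
  then have fb: "\<bar>fwd h i d y\<bar> \<le> Cstar * h^2"
    by (rule power2_le_imp_le) (use Cs h in simp)
  have eq: "d (y + h *\<^sub>R axis i 1) - d y = h * fwd h i d y" unfolding fwd_def using h by simp
  have "\<bar>h * fwd h i d y\<bar> = h * \<bar>fwd h i d y\<bar>" using h by (simp add: abs_mult)
  also have "\<dots> \<le> h * (Cstar * h^2)" using fb h by (intro mult_left_mono) auto
  also have "\<dots> = Cstar * h^3" by (simp add: power3_eq_cube power2_eq_square)
  finally show ?thesis using eq by simp
qed


lemma walk_bound: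
  fixes d :: "real^'n \<Rightarrow> real"
  assumes stepb: "\<And>y. y \<in> Omega_r0 Or h \<Longrightarrow> \<bar>d (y + h *\<^sub>R axis i 1) - d y\<bar> \<le> \<delta>"
    and bd: "\<forall>x\<in>bdry_rh Or h. d x = 0" and dl: "\<delta> \<ge> 0"
  shows "y \<in> Omega_rh Or h \<Longrightarrow> y + (real m * h) *\<^sub>R axis i 1 \<notin> Omega_r0 Or h
         \<Longrightarrow> \<bar>d y\<bar> \<le> real m * \<delta>"
proof (induction m arbitrary: y)
  case 0
  then have "y \<in> bdry_rh Or h" unfolding bdry_rh_def by simp
  then show ?case using bd by simp
next
  case (Suc m)
  show ?case
  proof (cases "y \<in> Omega_r0 Or h")
    case False
    then have "y \<in> bdry_rh Or h" using Suc.prems unfolding bdry_rh_def by simp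
    then show ?thesis using bd dl by simp
  next
    case True
    let ?y = "y + h *\<^sub>R axis i 1"
    have "?y \<in> Hd_stencil h y" unfolding Hd_stencil_def by blast
    then have y1: "?y \<in> Omega_rh Or h" using True unfolding Omega_r0_def by blast
    have eqy: "?y + (real m * h) *\<^sub>R axis i 1 = y + (real (Suc m) * h) *\<^sub>R axis i 1"
    proof -
      have e: "real (Suc m) * h = h + real m * h" by (simp add: algebra_simps)
      show ?thesis by (simp only: e scaleR_add_left add.assoc)
    qed
    have "?y + (real m * h) *\<^sub>R axis i 1 \<notin> Omega_r0 Or h" unfolding eqy using Suc.prems(2) .
    then have "\<bar>d ?y\<bar> \<le> real m * \<delta>" using Suc.IH[OF y1] by simp
    moreover have "\<bar>d ?y - d y\<bar> \<le> \<delta>" using stepb[OF True] .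
    ultimately show ?thesis by (simp add: algebra_simps)
  qed
qed

lemma r0_bound:
  fixes d :: "real^'n \<Rightarrow> real"
  assumes h: "h > 0" "h < 1" and Cs: "Cstar > 0" and sub: "Or \<subseteq> Omega"
    and sn: "seminorm1h Or h d \<le> Cstar * h powr (2 + real CARD('n) / 2)"
    and bd: "\<forall>x\<in>bdry_rh Or h. d x = 0"
    and x: "x \<in> Omega_r0 Or h"
  shows "\<bar>d x\<bar> \<le> 3 * Cstar"
proof -
  obtain i :: 'n where True by simp
  define m where "m = nat \<lceil>2/h\<rceil>"
  have m1: "real m \<ge> 2/h" unfolding m_def by linarith
  have p: "2/h > 0" using h by simp
  have cp: "\<lceil>2/h\<rceil> \<ge> 0" using p by (simp; linarith)
  have "real_of_int \<lceil>2/h\<rceil> - 1 < 2/h" using ceiling_correct[of "2/h"] by blast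
  then have m2: "real m \<le> 2/h + 1" unfolding m_def using cp by simp
  have xr: "x \<in> Omega_rh Or h" using x unfolding Omega_r0_def by blast
  have "x \<in> closure Omega" using Omega_r0_sub[OF sub] x by blast
  then have x0: "x $ i \<ge> 0" by (simp add: mem_closure_Omega)
  have "real m * h \<ge> 2" using m1 h by (simp add: field_simps)
  then have "(x + (real m * h) *\<^sub>R axis i 1) $ i > 1" using x0 by simp
  then have "x + (real m * h) *\<^sub>R axis i 1 \<notin> closure Omega" unfolding mem_closure_Omega by (metis not_le)
  then have nin: "x + (real m * h) *\<^sub>R axis i 1 \<notin> Omega_r0 Or h" using Omega_r0_sub[OF sub] by blast
  have "\<bar>d x\<bar> \<le> real m * (Cstar * h^3)"
  proof (rule walk_bound[OF _ bd _ xr nin])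
    show "\<And>y. y \<in> Omega_r0 Or h \<Longrightarrow> \<bar>d (y + h *\<^sub>R axis i 1) - d y\<bar> \<le> Cstar * h^3"
      by (rule step_bound[OF h(1) Cs sub sn])
    show "0 \<le> Cstar * h^3" using Cs h by simp
  qed
  also have "\<dots> \<le> (2/h + 1) * (Cstar * h^3)" using m2 Cs h by (intro mult_right_mono) auto
  also have "\<dots> = Cstar * (2 * h^2 + h^3)" using h by (simp add: field_simps power2_eq_square power3_eq_cube)
  also have "\<dots> \<le> Cstar * 3"
  proof -
    have "h^2 \<le> 1" "h^3 \<le> 1" using h by (simp_all add: power_le_one)
    then show ?thesis using Cs by (intro mult_left_mono) auto
  qed
  finally show ?thesis by simp
qed


lemma grid_step_arith:
  fixes a h :: real
  assumes h: "h > 0" and a: "a/h \<in> \<int>" and N: "1/h \<in> \<int>" and a01: "0 < a" "a < 1"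
  shows "0 \<le> a - h \<and> a + h \<le> 1"
proof -
  obtain k where k: "a/h = of_int k" using a by (auto elim: Ints_cases)
  obtain N' where n: "1/h = of_int N'" using N by (auto elim: Ints_cases)
  have ak: "a = h * of_int k" using k h by (simp add: field_simps)
  have hn: "1 = h * of_int N'" using n h by (simp add: field_simps)
  have "k > 0" using a01(1) ak h by (simp add: zero_less_mult_iff)
  then have k1: "of_int k \<ge> (1::real)" by simp
  have "h * of_int k < h * of_int N'" using a01(2) ak hn by simp
  then have "k < N'" using h by simp
  then have kN: "of_int k + 1 \<le> (of_int N' :: real)" by linarith
  have "a - h = h * (of_int k - 1)" using ak by (simp add: algebra_simps)
  moreover have "h * (of_int k - 1) \<ge> 0" using h k1 by simp
  moreover have "a + h = h * (of_int k + 1)" using ak by (simp add: algebra_simps)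
  moreover have "h * (of_int k + 1) \<le> h * of_int N'" using h kN by simp
  ultimately show ?thesis using hn by linarith
qed

lemma basis_in_Wh:
  fixes x :: "real^'n"
  assumes h: "h > 0" and N: "1/h \<in> \<int>" and x: "x \<in> Omega_h0 h"
  shows "(\<lambda>i. h *\<^sub>R axis i (1::real)) \<in> Wh h x"
proof -
  have xO: "\<forall>j. 0 < x$j \<and> x$j < 1" and xg: "\<forall>j. x$j / h \<in> \<int>"
    using x unfolding Omega_h0_def Omega_def grid_def by auto
  have mem: "x + s *\<^sub>R (h *\<^sub>R axis i 1) \<in> Omega_h h" if s: "s = 1 \<or> s = -1" for s i
  proof -
    have "(x + s *\<^sub>R (h *\<^sub>R axis i 1)) $ j / h \<in> \<int>" for j
    proof -
      have "(x + s *\<^sub>R (h *\<^sub>R axis i 1)) $ j / h = x$j/h + s * (if j = i then 1 else 0)"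
        using h by (simp add: axis_def field_simps)
      then show ?thesis using xg s by auto
    qed
    moreover have "0 \<le> (x + s *\<^sub>R (h *\<^sub>R axis i 1)) $ j \<and> (x + s *\<^sub>R (h *\<^sub>R axis i 1)) $ j \<le> 1" for j
    proof (cases "j = i")
      case True
      then show ?thesis using grid_step_arith[OF h xg[rule_format, of j] N] xO s h by (auto simp: axis_def)
    next
      case False
      then show ?thesis using xO by (auto simp: axis_def less_imp_le)
    qed
    ultimately show ?thesis unfolding Omega_h_def grid_def by (simp add: mem_closure_Omega)
  qed
  have "x + h *\<^sub>R axis i 1 \<in> Omega_h h" for i using mem[of 1 i] by simp
  moreover have "x - h *\<^sub>R axis i 1 \<in> Omega_h h" for i using mem[of "-1" i] by simp
  moreover have "h *\<^sub>R axis i (1::real) \<noteq> 0" for i using h by (simp add: axis_eq_0_iff)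
  moreover have "(h *\<^sub>R axis i (1::real)) \<bullet> (h *\<^sub>R axis j 1) = 0" if "i \<noteq> j" for i j
    using that by (simp add: inner_axis_axis)
  ultimately show ?thesis unfolding Wh_def by blast
qed


lemma Ms_le_zero:
  fixes v :: "real^'n \<Rightarrow> real"
  assumes b: "\<beta> \<in> Wh h x" and le: "\<And>i. v (x + \<beta> i) \<le> v x \<and> v (x - \<beta> i) \<le> v x"
  shows "Ms_plus h v x \<le> 0"
proof -
  let ?P = "\<lambda>\<alpha>. \<Prod>i\<in>UNIV. max ((v (x + \<alpha> i) - 2 * v x + v (x - \<alpha> i)) / (norm (\<alpha> i))\<^sup>2) (0::real)"
  have bdd: "bdd_below (?P ` Wh h x)"
    by (rule bdd_belowI[of _ 0]) (auto intro: prod_nonneg)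
  have P0: "?P \<beta> = 0"
  proof -
    have "max ((v (x + \<beta> i) - 2 * v x + v (x - \<beta> i)) / (norm (\<beta> i))\<^sup>2) 0 = 0" for i
    proof -
      have "v (x + \<beta> i) - 2 * v x + v (x - \<beta> i) \<le> 0" using le[of i] by linarith
      then have "(v (x + \<beta> i) - 2 * v x + v (x - \<beta> i)) / (norm (\<beta> i))\<^sup>2 \<le> 0"
        by (simp add: divide_nonpos_nonneg)
      then show ?thesis by simp
    qed
    then show ?thesis by simp
  qed
  have "(INF \<alpha>\<in>Wh h x. ?P \<alpha>) \<le> ?P \<beta>" using cINF_lower[OF bdd b] .
  then show ?thesis unfolding Ms_plus_def P0 .
qed

lemma Ms_ge:
  fixes v :: "real^'n \<Rightarrow> real"
  assumes ne: "Wh h x \<noteq> {}" and K: "K \<ge> 0"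
    and ge: "\<And>\<alpha> i. \<alpha> \<in> Wh h x \<Longrightarrow> K * (norm (\<alpha> i))\<^sup>2 \<le> v (x + \<alpha> i) - 2 * v x + v (x - \<alpha> i)"
  shows "Ms_plus h v x \<ge> K ^ CARD('n)"
  unfolding Ms_plus_def
proof (rule cINF_greatest[OF ne])
  fix \<alpha> assume a: "\<alpha> \<in> Wh h x"
  have "(\<Prod>i\<in>(UNIV::'n set). K) \<le> (\<Prod>i\<in>UNIV. max ((v (x + \<alpha> i) - 2 * v x + v (x - \<alpha> i)) / (norm (\<alpha> i))\<^sup>2) 0)"
  proof (rule prod_mono)
    fix i :: 'n
    have nz: "(norm (\<alpha> i))\<^sup>2 > 0" using a unfolding Wh_def by auto
    have "K \<le> (v (x + \<alpha> i) - 2 * v x + v (x - \<alpha> i)) / (norm (\<alpha> i))\<^sup>2"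
      using ge[OF a, of i] nz by (simp add: le_divide_eq)
    then show "0 \<le> K \<and> K \<le> max ((v (x + \<alpha> i) - 2 * v x + v (x - \<alpha> i)) / (norm (\<alpha> i))\<^sup>2) 0"
      using K by simp
  qed
  then show "K ^ CARD('n) \<le> (\<Prod>i\<in>UNIV. max ((v (x + \<alpha> i) - 2 * v x + v (x - \<alpha> i)) / (norm (\<alpha> i))\<^sup>2) 0)"
    by simp
qed

lemma quad_second_diff:
  fixes x a :: "real^'n"
  shows "K/2 * ((x + a) \<bullet> (x + a)) - 2 * (K/2 * (x \<bullet> x)) + K/2 * ((x - a) \<bullet> (x - a)) = K * (norm a)\<^sup>2"
  by (simp add: inner_add_left inner_add_right inner_diff_left inner_diff_right inner_commute
      power2_norm_eq_inner algebra_simps)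

theorem mainTheorem4:
  fixes f g u :: "real^'n \<Rightarrow> real" and Or :: "(real^'n) set" and Cstar :: real
  assumes n2: "CARD('n) \<ge> 2"
    and f_cont: "continuous_on (closure Omega) f"
    and f_pos: "\<forall>x\<in>closure Omega. f x > 0"
    and g_cont: "continuous_on (frontier Omega) g"
    and g_ext: "\<exists>gt. continuous_on (closure Omega) gt \<and> convex_on (closure Omega) gt
                     \<and> (\<forall>x\<in>frontier Omega. gt x = g x)"
    and u_sol: "MA_viscosity_solution f g u"
    and Or_open: "open Or" and Or_bounded: "bounded Or" and Or_convex: "convex Or"
    and Or_sub: "Or \<subseteq> Omega"
    and u_C2: "\<forall>x\<in>Or. \<exists>S. x \<in> S \<and> S \<subseteq> Omega \<and> C2_on S u"
    and Cstar_pos: "Cstar > 0"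
  shows "\<exists>C>0. \<exists>h0>0. \<forall>h. 0 < h \<and> h < h0 \<and> 1 / h \<in> \<int> \<longrightarrow>
           (\<forall>uh. solves_hybrid Or f g h uh
                 \<and> uh \<in> Bball Or g u h (Cstar * h powr (2 + real CARD('n) / 2)) \<longrightarrow>
                 (\<forall>x\<in>Omega_h0 h. \<bar>uh x\<bar> \<le> C))"
proof -
  let ?n = "CARD('n)"
  have cO: "compact (closure Omega :: (real^'n) set)" by (simp add: closure_Omega)
  have u_cont: "continuous_on (closure Omega) u" using u_sol unfolding MA_viscosity_solution_def by blast
  have u_bd: "\<forall>x\<in>frontier Omega. u x = g x" using u_sol unfolding MA_viscosity_solution_def by blast
  obtain Mu where Mu: "Mu > 0" "\<forall>x\<in>closure Omega. \<bar>u x\<bar> \<le> Mu"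
    using compact_imp_bounded[OF compact_continuous_image[OF u_cont cO]] unfolding bounded_pos
    by (auto simp: real_norm_def)
  obtain Fm where Fm: "Fm > 0" "\<forall>x\<in>closure Omega. \<bar>f x\<bar> \<le> Fm"
    using compact_imp_bounded[OF compact_continuous_image[OF f_cont cO]] unfolding bounded_pos
    by (auto simp: real_norm_def)
  obtain R where R: "R > 0" "\<forall>x\<in>closure Omega. norm (x::real^'n) \<le> R"
    using compact_imp_bounded[OF cO] unfolding bounded_pos by auto
  define B where "B = Mu + 3 * Cstar"
  define K where "K = Fm + 1"
  define C where "C = B + K / 2 * R\<^sup>2 + 1"
  have Kge: "K ^ ?n \<ge> K"
  proof -
    have "?n \<ge> 1" using n2 by simp
    moreover have "1 \<le> K" unfolding K_def using Fm by simp
    ultimately have "K^1 \<le> K^?n" by (rule power_increasing)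
    then show ?thesis by simp
  qed
  have Bpos: "B > 0" unfolding B_def using Mu Cstar_pos by simp
  have Cpos: "C > 0" unfolding C_def using Bpos Fm R unfolding K_def by (simp add: add_pos_nonneg)
  show ?thesis
  proof (rule exI[of _ C], intro conjI Cpos, rule exI[of _ "1::real"], intro conjI zero_less_one allI impI ballI)
    fix h :: real and uh :: "real^'n \<Rightarrow> real" and x :: "real^'n"
    assume hyp: "0 < h \<and> h < 1 \<and> 1 / h \<in> \<int>"
      and sol: "solves_hybrid Or f g h uh \<and> uh \<in> Bball Or g u h (Cstar * h powr (2 + real ?n / 2))"
      and x: "x \<in> Omega_h0 h"
    have h: "h > 0" "h < 1" and N: "1/h \<in> \<int>" using hyp by auto
    have eq0: "\<forall>y\<in>Omega_h0 h. Fh Or f h uh y = 0" using sol unfolding solves_hybrid_def by blast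
    have bdg: "\<forall>y\<in>bdry_h h. uh y = g y" using sol unfolding solves_hybrid_def by blast
    have sn: "seminorm1h Or h (\<lambda>y. uh y - u y) \<le> Cstar * h powr (2 + real ?n / 2)"
      and bdu: "\<forall>y\<in>bdry_rh Or h. uh y = u y" using sol unfolding Bball_def by auto
    have fin: "finite (Omega_h h :: (real^'n) set)"
      unfolding Omega_h_def using finite_grid_cube[OF h(1)] .
    have Oh_cl: "Omega_h h \<subseteq> closure Omega" unfolding Omega_h_def by blast
    have h0_h: "Omega_h0 h \<subseteq> Omega_h h" unfolding Omega_h0_def Omega_h_def using closure_subset by blast
    have s_h0: "Omega_s Or h \<subseteq> Omega_h0 h" unfolding Omega_s_def by blast
    have Bnd: "\<bar>uh y\<bar> \<le> B" if y: "y \<in> Omega_h h" "y \<notin> Omega_s Or h" for y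
    proof (cases "y \<in> Omega_h0 h")
      case False
      then have "y \<in> bdry_h h" using y unfolding bdry_h_def by blast
      moreover have "y \<in> frontier Omega"
      proof -
        have "y \<in> closure Omega" "y \<notin> Omega" using y False unfolding Omega_h_def Omega_h0_def by auto
        then show ?thesis unfolding frontier_def using interior_subset by blast
      qed
      ultimately have "uh y = u y" using bdg u_bd by auto
      then show ?thesis using Mu y Oh_cl Cstar_pos unfolding B_def by fastforce
    next
      case True
      then have yr: "y \<in> Omega_r0 Or h" using y unfolding Omega_s_def by blast
      have bd0: "\<forall>z\<in>bdry_rh Or h. uh z - u z = 0" using bdu by simp
      have "\<bar>uh y - u y\<bar> \<le> 3 * Cstar"
        using r0_bound[OF h Cstar_pos Or_sub sn bd0 yr] by simp
      moreover have "\<bar>u y\<bar> \<le> Mu" using Mu y Oh_cl by blast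
      ultimately show ?thesis unfolding B_def by linarith
    qed
    have Ms_eq: "Ms_plus h uh y = f y" if "y \<in> Omega_s Or h" for y
    proof -
      have "Fh Or f h uh y = 0" using eq0 that s_h0 by blast
      then show ?thesis using that unfolding Fh_def by simp
    qed
    have xh: "x \<in> Omega_h h" using h0_h x by (rule subsetD)
    have ne: "Omega_h h \<noteq> ({}::(real^'n) set)" using xh by auto
    obtain xM where xM: "xM \<in> Omega_h h" "\<forall>y\<in>Omega_h h. uh y \<le> uh xM"
    proof -
      have "Max (uh ` Omega_h h) \<in> uh ` Omega_h h" using fin ne by (intro Max_in) auto
      then obtain z where "z \<in> Omega_h h" "uh z = Max (uh ` Omega_h h)" by auto
      moreover have "\<forall>y\<in>Omega_h h. uh y \<le> Max (uh ` Omega_h h)" using fin by auto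
      ultimately show ?thesis using that by auto
    qed
    have "xM \<notin> Omega_s Or h"
    proof
      assume s: "xM \<in> Omega_s Or h"
      have bW: "(\<lambda>i. h *\<^sub>R axis i (1::real)) \<in> Wh h xM"
        using basis_in_Wh[OF h(1) N] s s_h0 by blast
      have "Ms_plus h uh xM \<le> 0"
        by (rule Ms_le_zero[OF bW]) (use bW xM(2) in \<open>auto simp: Wh_def\<close>)
      moreover have "f xM > 0" using f_pos xM(1) Oh_cl by blast
      ultimately show False using Ms_eq[OF s] by simp
    qed
    then have "uh xM \<le> B" using Bnd[OF xM(1)] by simp
    then have up: "uh x \<le> B" using xM(2) xh by fastforce
    define w where "w = (\<lambda>y::real^'n. K/2 * (y \<bullet> y))"
    obtain xm where xm: "xm \<in> Omega_h h" "\<forall>y\<in>Omega_h h. uh xm - w xm \<le> uh y - w y"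
    proof -
      let ?phi = "\<lambda>y. uh y - w y"
      have "Min (?phi ` Omega_h h) \<in> ?phi ` Omega_h h" using fin ne by (intro Min_in) auto
      then obtain z where "z \<in> Omega_h h" "?phi z = Min (?phi ` Omega_h h)" by auto
      moreover have "\<forall>y\<in>Omega_h h. Min (?phi ` Omega_h h) \<le> ?phi y" using fin by auto
      ultimately show ?thesis using that by auto
    qed
    have "xm \<notin> Omega_s Or h"
    proof
      assume s: "xm \<in> Omega_s Or h"
      have bW: "(\<lambda>i. h *\<^sub>R axis i (1::real)) \<in> Wh h xm"
        using basis_in_Wh[OF h(1) N] s s_h0 by blast
      have "Ms_plus h uh xm \<ge> K ^ ?n"
      proof (rule Ms_ge)
        show "Wh h xm \<noteq> {}" using bW by blast
        show "K \<ge> 0" unfolding K_def using Fm by simp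
        fix \<alpha> i assume a: "\<alpha> \<in> Wh h xm"
        have p: "xm + \<alpha> i \<in> Omega_h h" "xm - \<alpha> i \<in> Omega_h h" using a unfolding Wh_def by auto
        have "uh xm - w xm \<le> uh (xm + \<alpha> i) - w (xm + \<alpha> i)"
             "uh xm - w xm \<le> uh (xm - \<alpha> i) - w (xm - \<alpha> i)" using xm(2) p by auto
        moreover have "w (xm + \<alpha> i) - 2 * w xm + w (xm - \<alpha> i) = K * (norm (\<alpha> i))\<^sup>2"
          unfolding w_def by (rule quad_second_diff)
        ultimately show "K * (norm (\<alpha> i))\<^sup>2 \<le> uh (xm + \<alpha> i) - 2 * uh xm + uh (xm - \<alpha> i)"
          by linarith
      qed
      moreover have "f xm \<le> Fm" using Fm xm(1) Oh_cl by fastforce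
      moreover have "Fm < K" unfolding K_def by simp
      ultimately show False using Ms_eq[OF s] Kge by simp
    qed
    then have bm: "\<bar>uh xm\<bar> \<le> B" using Bnd[OF xm(1)] by simp
    have KR: "K/2 * R\<^sup>2 \<ge> 0" unfolding K_def using Fm by simp
    have wx: "w x \<ge> 0" unfolding w_def K_def using Fm by simp
    have "w xm \<le> K/2 * R\<^sup>2"
    proof -
      have "norm xm \<le> R" using R xm(1) Oh_cl by blast
      then have "xm \<bullet> xm \<le> R\<^sup>2" using norm_ge_zero[of xm]
        by (metis power2_norm_eq_inner power_mono)
      then show ?thesis unfolding w_def K_def using Fm by (intro mult_left_mono) auto
    qed
    moreover have "uh xm - w xm \<le> uh x - w x" using xm(2) xh by blast
    ultimately have "uh x \<ge> - B - K/2 * R\<^sup>2" using bm wx by linarith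
    then show "\<bar>uh x\<bar> \<le> C" using up Bpos KR unfolding C_def by linarith
  qed
qed

end
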